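(* Let $K,F,Z,S,u$ be positive integers and let $\mathbf{P}$ be a $(K,F,Z,S)$ placement delivery array (PDA). Then the $F\times uK$ array $[\mathbf{P}\,|\,\mathbf{P}\,|\,\cdots\,|\,\mathbf{P}]$ obtained by placing $u$ copies of $\mathbf{P}$ side by side is a $(uK,u,F,Z,S)$ EPDA.
   Context: Notation: $[n]=\{1,\dots,n\}$. PDA: an $F\times K$ array $\mathbf{P}=[p_{j,k}]$ with entries either a symbol $\star$ or integers in $[S]$ is a $(K,F,Z,S)$ PDA if: (D1) $\star$ appears exactly $Z$ times in each column; (D2) each integer in $[S]$ occurs at least once; (D3) for any two distinct entries with $p_{j_1,k_1}=p_{j_2,k_2}=s$ an integer, we have $j_1\neq j_2$, $k_1\neq k_2$, and $p_{j_1,k_2}=p_{j_2,k_1}=\star$. EPDA: an $F\times K$ array $\mathbf{A}=[a_{j,k}]$ with entries either $\star$ or integers in $[S]$ is a $(K,L,F,Z,S)$ EPDA (where $L\le K$ is a positive integer) if: (C1) $\star$ appears exactly $Z$ times in each column; (C2) every integer in $[S]$ occurs at least once; (C3) no integer appears more than once in any column; (C4) for each $s\in[S]$, letting $\mathbf{A}^{(s)}$ be the subarray obtained by deleting all rows and columns of $\mathbf{A}$ not containing $s$, no row of $\mathbf{A}^{(s)}$ contains more than $L$ integer entries. *)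

theory Defs
  imports Main
begin

text \<open>An F x K array with entries star or integers in [S] is modelled as a function
  A :: nat => nat => nat option, where A j k is the entry in row j (1 <= j <= F)
  and column k (1 <= k <= K); None denotes the symbol star, Some s the integer s.
  Values outside the index ranges are irrelevant.\<close>

definition is_PDA :: "nat \<Rightarrow> nat \<Rightarrow> nat \<Rightarrow> nat \<Rightarrow> (nat \<Rightarrow> nat \<Rightarrow> nat option) \<Rightarrow> bool" where
  "is_PDA K F Z S P \<longleftrightarrow>
     (\<forall>j\<in>{1..F}. \<forall>k\<in>{1..K}. \<forall>s. P j k = Some s \<longrightarrow> s \<in> {1..S}) \<and>
     (\<forall>k\<in>{1..K}. card {j\<in>{1..F}. P j k = None} = Z) \<and>
     (\<forall>s\<in>{1..S}. \<exists>j\<in>{1..F}. \<exists>k\<in>{1..K}. P j k = Some s) \<and>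
     (\<forall>j1\<in>{1..F}. \<forall>k1\<in>{1..K}. \<forall>j2\<in>{1..F}. \<forall>k2\<in>{1..K}. \<forall>s.
        (j1, k1) \<noteq> (j2, k2) \<and> P j1 k1 = Some s \<and> P j2 k2 = Some s \<longrightarrow>
        j1 \<noteq> j2 \<and> k1 \<noteq> k2 \<and> P j1 k2 = None \<and> P j2 k1 = None)"

definition is_EPDA :: "nat \<Rightarrow> nat \<Rightarrow> nat \<Rightarrow> nat \<Rightarrow> nat \<Rightarrow> (nat \<Rightarrow> nat \<Rightarrow> nat option) \<Rightarrow> bool" where
  "is_EPDA K L F Z S A \<longleftrightarrow>
     0 < L \<and> L \<le> K \<and>
     (\<forall>j\<in>{1..F}. \<forall>k\<in>{1..K}. \<forall>s. A j k = Some s \<longrightarrow> s \<in> {1..S}) \<and>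
     (\<forall>k\<in>{1..K}. card {j\<in>{1..F}. A j k = None} = Z) \<and>
     (\<forall>s\<in>{1..S}. \<exists>j\<in>{1..F}. \<exists>k\<in>{1..K}. A j k = Some s) \<and>
     (\<forall>k\<in>{1..K}. \<forall>j1\<in>{1..F}. \<forall>j2\<in>{1..F}. \<forall>s.
        A j1 k = Some s \<and> A j2 k = Some s \<longrightarrow> j1 = j2) \<and>
     (\<forall>s\<in>{1..S}.
        let R = {j\<in>{1..F}. \<exists>k\<in>{1..K}. A j k = Some s};
            C = {k\<in>{1..K}. \<exists>j\<in>{1..F}. A j k = Some s}
        in \<forall>j\<in>R. card {k\<in>C. A j k \<noteq> None} \<le> L)"

text \<open>[P | P | ... | P] with u copies: column k (1 <= k <= uK) of the result is
  column ((k - 1) mod K) + 1 of P.\<close>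
definition hrepeat :: "nat \<Rightarrow> (nat \<Rightarrow> nat \<Rightarrow> nat option) \<Rightarrow> (nat \<Rightarrow> nat \<Rightarrow> nat option)" where
  "hrepeat K P = (\<lambda>j k. P j ((k - 1) mod K + 1))"

end

theory Submission
  imports Defs
begin

lemma fiber_card:
  fixes K u k0 :: nat
  assumes "0 < K"
  shows "card {k\<in>{1..u*K}. (k - 1) mod K + 1 = k0} \<le> u"
proof -
  let ?T = "{k\<in>{1..u*K}. (k - 1) mod K + 1 = k0}"
  have inj: "inj_on (\<lambda>k. (k - 1) div K) ?T"
  proof (rule inj_onI)
    fix x y assume x: "x \<in> ?T" and y: "y \<in> ?T" and e: "(x - 1) div K = (y - 1) div K"
    have "(x - 1) mod K = (y - 1) mod K" using x y by auto
    hence "x - 1 = y - 1" using e by (metis div_mult_mod_eq)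
    thus "x = y" using x y by auto
  qed
  have sub: "(\<lambda>k. (k - 1) div K) ` ?T \<subseteq> {0..<u}"
  proof
    fix z assume "z \<in> (\<lambda>k. (k - 1) div K) ` ?T"
    then obtain k where k: "k \<in> ?T" "z = (k - 1) div K" by auto
    have "k - 1 < u * K" using k by auto
    hence "(k - 1) div K < u" using assms
      by (simp add: div_less_iff_less_mult mult.commute)
    thus "z \<in> {0..<u}" using k by auto
  qed
  have "card ?T = card ((\<lambda>k. (k - 1) div K) ` ?T)" using inj by (simp add: card_image)
  also have "\<dots> \<le> card {0..<u}" by (rule card_mono[OF _ sub]) simp
  finally show ?thesis by simp
qed

theorem corollary1:
  fixes K F Z S u :: nat and P :: "nat \<Rightarrow> nat \<Rightarrow> nat option"
  assumes "0 < K" "0 < F" "0 < Z" "0 < S" "0 < u"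
    and "is_PDA K F Z S P"
  shows "is_EPDA (u * K) u F Z S (hrepeat K P)"
proof -
  define m where "m = (\<lambda>k::nat. (k - 1) mod K + 1)"
  have m_rng: "\<And>k. m k \<in> {1..K}" using assms(1) unfolding m_def
    by (simp add: Suc_leI)
  have m_id: "\<And>k. k \<in> {1..K} \<Longrightarrow> m k = k" unfolding m_def
    by (metis Suc_diff_1 Suc_eq_plus1 atLeastAtMost_iff diff_less less_le_trans
        mod_less not_less_eq_eq zero_less_one le_eq_less_or_eq less_Suc_eq_le)
  have H: "hrepeat K P = (\<lambda>j k. P j (m k))" unfolding hrepeat_def m_def by simp
  note P = assms(6)[unfolded is_PDA_def]
  have P1: "\<forall>j\<in>{1..F}. \<forall>k\<in>{1..K}. \<forall>s. P j k = Some s \<longrightarrow> s \<in> {1..S}" using P by blast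
  have P2: "\<forall>k\<in>{1..K}. card {j\<in>{1..F}. P j k = None} = Z" using P by blast
  have P3: "\<forall>s\<in>{1..S}. \<exists>j\<in>{1..F}. \<exists>k\<in>{1..K}. P j k = Some s" using P by blast
  have P4: "\<forall>j1\<in>{1..F}. \<forall>k1\<in>{1..K}. \<forall>j2\<in>{1..F}. \<forall>k2\<in>{1..K}. \<forall>s.
        (j1, k1) \<noteq> (j2, k2) \<and> P j1 k1 = Some s \<and> P j2 k2 = Some s \<longrightarrow>
        j1 \<noteq> j2 \<and> k1 \<noteq> k2 \<and> P j1 k2 = None \<and> P j2 k1 = None" using P by blast
  have uK: "u \<le> u * K" using assms(1) by simp
  have c1: "\<forall>j\<in>{1..F}. \<forall>k\<in>{1..u*K}. \<forall>s. P j (m k) = Some s \<longrightarrow> s \<in> {1..S}"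
    using P1 m_rng by blast
  have c2: "\<forall>k\<in>{1..u*K}. card {j\<in>{1..F}. P j (m k) = None} = Z"
    using P2 m_rng by blast
  have c3: "\<forall>s\<in>{1..S}. \<exists>j\<in>{1..F}. \<exists>k\<in>{1..u*K}. P j (m k) = Some s"
  proof
    fix s assume "s \<in> {1..S}"
    then obtain j k where jk: "j \<in> {1..F}" "k \<in> {1..K}" "P j k = Some s" using P3 by blast
    have "k \<in> {1..u*K}" using jk(2) assms(5) by (auto intro: order_trans[OF _ mult_le_mono1[of 1 u K]])
    thus "\<exists>j\<in>{1..F}. \<exists>k\<in>{1..u*K}. P j (m k) = Some s" using jk m_id by metis
  qed
  have c4: "\<forall>k\<in>{1..u*K}. \<forall>j1\<in>{1..F}. \<forall>j2\<in>{1..F}. \<forall>s.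
        P j1 (m k) = Some s \<and> P j2 (m k) = Some s \<longrightarrow> j1 = j2"
    using P4 m_rng by blast
  have c5: "\<forall>s\<in>{1..S}.
        let R = {j\<in>{1..F}. \<exists>k\<in>{1..u*K}. P j (m k) = Some s};
            C = {k\<in>{1..u*K}. \<exists>j\<in>{1..F}. P j (m k) = Some s}
        in \<forall>j\<in>R. card {k\<in>C. P j (m k) \<noteq> None} \<le> u"
    unfolding Let_def
  proof (intro ballI)
    fix s j assume s: "s \<in> {1..S}" and j: "j \<in> {j\<in>{1..F}. \<exists>k\<in>{1..u*K}. P j (m k) = Some s}"
    then obtain k0 where k0: "k0 \<in> {1..u*K}" "P j (m k0) = Some s" "j \<in> {1..F}" by auto
    have "{k\<in>{k\<in>{1..u*K}. \<exists>j\<in>{1..F}. P j (m k) = Some s}. P j (m k) \<noteq> None}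
          \<subseteq> {k\<in>{1..u*K}. (k - 1) mod K + 1 = m k0}"
    proof
      fix k assume k: "k \<in> {k\<in>{k\<in>{1..u*K}. \<exists>j\<in>{1..F}. P j (m k) = Some s}. P j (m k) \<noteq> None}"
      then obtain j' where j': "j' \<in> {1..F}" "P j' (m k) = Some s" by auto
      have "m k = m k0"
      proof (rule ccontr)
        assume ne: "m k \<noteq> m k0"
        have "P j (m k) = None"
          using P4[rule_format, OF k0(3) m_rng j'(1) m_rng, of k0 k s] ne k0(2) j'(2) by auto
        thus False using k by auto
      qed
      thus "k \<in> {k\<in>{1..u*K}. (k - 1) mod K + 1 = m k0}" using k unfolding m_def by auto
    qed
    hence "card {k\<in>{k\<in>{1..u*K}. \<exists>j\<in>{1..F}. P j (m k) = Some s}. P j (m k) \<noteq> None}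
          \<le> card {k\<in>{1..u*K}. (k - 1) mod K + 1 = m k0}"
      by (rule card_mono[rotated]) simp
    also have "\<dots> \<le> u" by (rule fiber_card[OF assms(1)])
    finally show "card {k\<in>{k\<in>{1..u*K}. \<exists>j\<in>{1..F}. P j (m k) = Some s}. P j (m k) \<noteq> None} \<le> u" .
  qed
  show ?thesis unfolding is_EPDA_def H using assms(5) uK c1 c2 c3 c4 c5 by blast
qed

end
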